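(* Let $u\in[0,1]$, $s\geq 1$, and for $x\in(0,1)$ define $$f_{u,s}(x)=\frac{s}{2}\log(1-ux^2)-\log\left(\frac{\pi}{2\mathcal{K}(x)}\right).$$ Then $f_{u,s}(x)>0$ for all $x\in(0,1)$ if and only if $2su\leq 1$.
   Context: $\mathcal{K}(r)$ denotes the complete elliptic integral of the first kind: for $0<r<1$, $\mathcal{K}(r)=\int_0^{\pi/2}(1-r^2\sin^2\theta)^{-1/2}\,d\theta=\frac{\pi}{2}\,{}_2F_1(1/2,1/2;1;r^2)$. *)

theory Defs
  imports "HOL-Analysis.Analysis"
begin

definition ellK :: "real \<Rightarrow> real" where
  "ellK r = integral {0..pi/2} (\<lambda>t. 1 / sqrt (1 - r\<^sup>2 * (sin t)\<^sup>2))"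

definition f_us :: "real \<Rightarrow> real \<Rightarrow> real \<Rightarrow> real" where
  "f_us u s x = s / 2 * ln (1 - u * x\<^sup>2) - ln (pi / (2 * ellK x))"

end

theory Submission
  imports Defs
begin


lemma int_cos2: "((\<lambda>t. cos (2*t)) has_integral 0) {0..pi/2}"
proof -
  have "((\<lambda>t. cos (2*t)) has_integral (sin (2*(pi/2))/2 - sin (2*0)/2)) {0..pi/2}"
    apply (rule fundamental_theorem_of_calculus)
     apply simp
    apply (rule has_real_derivative_iff_has_vector_derivative[THEN iffD1, OF DERIV_subset])
     apply (auto intro!: derivative_eq_intros)
    done
  then show ?thesis by simp
qed

lemma int_cos2sq: "((\<lambda>t. (cos (2*t))^2) has_integral pi/4) {0..pi/2}"
proof -
  have "((\<lambda>t. (1 + cos (4*t))/2) has_integral ((pi/2)/2 + sin (4*(pi/2))/8 - (0/2 + sin (4*0)/8))) {0..pi/2}"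
    apply (rule fundamental_theorem_of_calculus)
     apply simp
    apply (rule has_real_derivative_iff_has_vector_derivative[THEN iffD1, OF DERIV_subset])
     apply (auto intro!: derivative_eq_intros)
    done
  moreover have "sin (4*(pi/2)) = 0" by (simp add: sin_zero_iff_int2)
  moreover have "\<And>t::real. (1 + cos (4*t))/2 = (cos (2*t))^2"
  proof -
    fix t :: real
    have "cos (2*(2*t)) = 2 * (cos (2*t))^2 - 1" by (rule cos_double_cos)
    then show "(1 + cos (4*t))/2 = (cos (2*t))^2" by simp
  qed
  ultimately show ?thesis by simp
qed

lemma ln_bern:
  fixes a s :: real assumes "0 \<le> a" "a < 1" "1 \<le> s"
  shows "ln (1 - a) \<le> s * ln (1 - a/s)"
proof -
  have "(1 - 1/s) * ln 1 + (1/s) * ln (1 - a) \<le> ln ((1 - 1/s) *\<^sub>R 1 + (1/s) *\<^sub>R (1 - a))"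
    by (rule concave_onD[OF ln_concave]) (use assms in auto)
  moreover have "(1 - 1/s) *\<^sub>R 1 + (1/s) *\<^sub>R (1 - a) = 1 - a/s" using assms by (simp add: field_simps)
  ultimately have "(1/s) * ln (1 - a) \<le> ln (1 - a/s)" by (metis ln_one mult_zero_right add_0)
  then show ?thesis using assms by (simp add: field_simps)
qed



lemma key_id:
  fixes w b :: real assumes "w > 0" "b > 0"
  shows "1/w - 1/b + (w^2-b^2)/(2*b^3) = (w-b)^2*(w+2*b)/(2*w*b^3)"
  using assms by (simp add: field_simps power2_eq_square power3_eq_cube)

lemma lower_pt:
  fixes w b :: real assumes "0 < w" "w \<le> 1" "0 < b" "b \<le> 1"
  shows "1/b - (w^2-b^2)/(2*b^3) + (w^2-b^2)^2/8 \<le> 1/w"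
proof -
  have wb: "w*b^3 \<le> 1" using assms by (intro mult_le_one power_le_one) auto
  have "w*b^3*(w+b)^2 \<le> 1 * (w+b)^2"
    by (rule mult_right_mono[OF wb]) simp
  also have "\<dots> \<le> 2*(w+b)" using assms
  proof -
    have "(w+b)*(w+b) \<le> 2*(w+b)" by (rule mult_right_mono) (use assms in auto)
    then show ?thesis by (simp add: power2_eq_square)
  qed
  also have "\<dots> \<le> 4*(w+2*b)" using assms by simp
  finally have m: "w*b^3*(w+b)^2 \<le> 4*(w+2*b)" .
  have pos: "2*w*b^3 > 0" using assms by simp
  have "(w+b)^2/8 \<le> (w+2*b)/(2*w*b^3)"
    using m pos by (simp add: field_simps)
  then have "(w-b)^2 * ((w+b)^2/8) \<le> (w-b)^2 * ((w+2*b)/(2*w*b^3))"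
    by (intro mult_left_mono) auto
  moreover have "(w^2-b^2)^2 = (w-b)^2*(w+b)^2" by algebra
  ultimately have "(w^2-b^2)^2/8 \<le> 1/w - 1/b + (w^2-b^2)/(2*b^3)"
    using key_id[OF assms(1,3)] by simp
  then show ?thesis by linarith
qed

lemma upper_pt:
  fixes w b :: real assumes "1/2 \<le> w" "w \<le> 1" "1/2 \<le> b" "b \<le> 1"
  shows "1/w \<le> 1/b - (w^2-b^2)/(2*b^3) + 24*(w^2-b^2)^2"
proof -
  have b3: "b^3 \<ge> (1/2)^3" using assms by (intro power_mono) auto
  have wb: "w*b^3 \<ge> (1/2)*(1/2)^3" using assms b3 by (intro mult_mono) auto
  have sq: "(w+b)^2 \<ge> 1" 
  proof -
    have "1*1 \<le> (w+b)*(w+b)" using assms by (intro mult_mono) auto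
    then show ?thesis by (simp add: power2_eq_square)
  qed
  have "w*b^3 \<ge> 1/16" using wb by (simp add: power3_eq_cube)
  then have "w+2*b \<le> 48*(w*b^3)" using assms by linarith
  also have "\<dots> \<le> 48*(w*b^3)*(w+b)^2" using sq \<open>w*b^3 \<ge> 1/16\<close>
    by (simp add: mult_le_cancel_left1)
  finally have m: "w+2*b \<le> 48*(w*b^3)*(w+b)^2" .
  have pos: "2*w*b^3 > 0" using assms by simp
  have "(w+2*b)/(2*w*b^3) \<le> 24*(w+b)^2"
    using m pos by (simp add: field_simps)
  then have "(w-b)^2 * ((w+2*b)/(2*w*b^3)) \<le> (w-b)^2 * (24*(w+b)^2)"
    by (intro mult_left_mono) auto
  moreover have "(w^2-b^2)^2 = (w-b)^2*(w+b)^2" by algebra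
  ultimately have "1/w - 1/b + (w^2-b^2)/(2*b^3) \<le> 24*(w^2-b^2)^2"
    using key_id[of w b] assms by simp
  then show ?thesis by linarith
qed



lemma int_h:
  fixes A B C :: real
  shows "((\<lambda>t. A + B*cos(2*t) + C*(cos(2*t))^2) has_integral ((pi/2)*A + C*(pi/4))) {0..pi/2}"
proof -
  have c: "((\<lambda>t. A) has_integral (pi/2)*A) {0..pi/2}" using has_integral_const_real[of A 0 "pi/2"] by simp
  have "((\<lambda>t. A + B*cos(2*t) + C*(cos(2*t))^2) has_integral ((pi/2)*A + B*0 + C*(pi/4))) {0..pi/2}"
    by (intro has_integral_add has_integral_mult_right c int_cos2 int_cos2sq)
  then show ?thesis by simp
qed

lemma g_cont: fixes x :: real assumes "\<bar>x\<bar> < 1"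
  shows "continuous_on {0..pi/2} (\<lambda>t. 1 / sqrt (1 - x\<^sup>2 * (sin t)\<^sup>2))"
proof -
  have "\<And>t::real. x\<^sup>2 * (sin t)\<^sup>2 < 1"
  proof -
    fix t :: real
    have "x\<^sup>2 < 1" using assms by (simp add: abs_square_less_1)
    moreover have "(sin t)\<^sup>2 \<le> 1" by (simp add: abs_square_le_1)
    ultimately show "x\<^sup>2 * (sin t)\<^sup>2 < 1"
      by (metis less_le_trans mult_left_le mult_nonneg_nonneg zero_le_power2 le_less_trans mult_less_cancel_right1 mult_le_cancel_left1 linorder_not_le order.strict_iff_not)
  qed
  then show ?thesis by (intro continuous_intros) (auto, metis less_irrefl)
qed



lemma pt_setup:
  fixes x t w b :: real assumes "\<bar>x\<bar> < 1"
  and w_def: "w = sqrt (1 - x\<^sup>2 * (sin t)\<^sup>2)" and b_def: "b = sqrt (1 - x\<^sup>2/2)"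
  shows "0 < w" "w \<le> 1" "0 < b" "b \<le> 1" "w^2 - b^2 = x\<^sup>2 * cos (2*t) / 2"
    "1 - x\<^sup>2 * (sin t)\<^sup>2 \<ge> 1 - x\<^sup>2"
proof -
  have x2: "x\<^sup>2 < 1" using assms by (simp add: abs_square_less_1)
  have s2: "(sin t)\<^sup>2 \<le> 1" by (simp add: abs_square_le_1)
  have "x\<^sup>2 * (sin t)\<^sup>2 \<le> x\<^sup>2 * 1" by (rule mult_left_mono[OF s2]) simp
  then show lo: "1 - x\<^sup>2 * (sin t)\<^sup>2 \<ge> 1 - x\<^sup>2" by simp
  then show "0 < w" using x2 unfolding w_def by simp
  show "w \<le> 1" unfolding w_def by simp
  show "0 < b" using x2 unfolding b_def by simp
  show "b \<le> 1" unfolding b_def by simp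
  have "w^2 = 1 - x\<^sup>2 * (sin t)\<^sup>2" unfolding w_def using lo x2 by simp
  moreover have "b^2 = 1 - x\<^sup>2/2" unfolding b_def using x2 by simp
  moreover have c: "cos (2*t) = 1 - 2*(sin t)^2" by (rule cos_double_sin)
  ultimately show "w^2 - b^2 = x\<^sup>2 * cos (2*t) / 2" unfolding c by (simp add: algebra_simps)
qed

lemma K_lower:
  fixes x :: real assumes "\<bar>x\<bar> < 1"
  shows "ellK x \<ge> pi / (2 * sqrt (1 - x\<^sup>2/2)) + x^4 * pi / 128"
proof -
  define b where "b = sqrt (1 - x\<^sup>2/2)"
  have b: "0 < b" "b \<le> 1" using pt_setup[OF assms] unfolding b_def by auto
  define h where "h = (\<lambda>t::real. 1/b + (-(x\<^sup>2/(4*b^3)))*cos(2*t) + (x^4/32)*(cos(2*t))^2)"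
  have hi: "(h has_integral ((pi/2)*(1/b) + (x^4/32)*(pi/4))) {0..pi/2}"
    unfolding h_def by (rule int_h)
  have gi: "(\<lambda>t. 1 / sqrt (1 - x\<^sup>2 * (sin t)\<^sup>2)) integrable_on {0..pi/2}"
    by (rule integrable_continuous_real[OF g_cont[OF assms]])
  have "integral {0..pi/2} h \<le> ellK x"
    unfolding ellK_def
  proof (rule integral_le[OF has_integral_integrable[OF hi] gi])
    fix t assume "t \<in> {0..pi/2}"
    define w where "w = sqrt (1 - x\<^sup>2 * (sin t)\<^sup>2)"
    note P = pt_setup[OF assms w_def b_def]
    have "1/b - (w^2-b^2)/(2*b^3) + (w^2-b^2)^2/8 \<le> 1/w"
      by (rule lower_pt) (use P in auto)
    moreover have "h t = 1/b - (w^2-b^2)/(2*b^3) + (w^2-b^2)^2/8"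
      unfolding h_def P(5) by (simp add: power2_eq_square field_simps eval_nat_numeral)
    ultimately show "h t \<le> 1 / sqrt (1 - x\<^sup>2 * (sin t)\<^sup>2)" unfolding w_def by simp
  qed
  moreover have "integral {0..pi/2} h = pi / (2*b) + x^4*pi/128"
    using integral_unique[OF hi] by simp
  ultimately show ?thesis unfolding b_def by simp
qed

lemma K_upper:
  fixes x :: real assumes "\<bar>x\<bar> < 1" "x\<^sup>2 \<le> 1/2"
  shows "ellK x \<le> pi / (2 * sqrt (1 - x\<^sup>2/2)) + 3 * x^4 * pi / 2"
proof -
  define b where "b = sqrt (1 - x\<^sup>2/2)"
  have "(1/2)^2 \<le> 1 - x\<^sup>2/2" using assms(2) by (simp add: power2_eq_square)
  then have b1: "1/2 \<le> b" unfolding b_def by (rule real_le_rsqrt)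
  have b: "1/2 \<le> b" "b \<le> 1" using b1 unfolding b_def by auto
  define h where "h = (\<lambda>t::real. 1/b + (-(x\<^sup>2/(4*b^3)))*cos(2*t) + (6*x^4)*(cos(2*t))^2)"
  have hi: "(h has_integral ((pi/2)*(1/b) + (6*x^4)*(pi/4))) {0..pi/2}"
    unfolding h_def by (rule int_h)
  have gi: "(\<lambda>t. 1 / sqrt (1 - x\<^sup>2 * (sin t)\<^sup>2)) integrable_on {0..pi/2}"
    by (rule integrable_continuous_real[OF g_cont[OF assms(1)]])
  have "ellK x \<le> integral {0..pi/2} h"
    unfolding ellK_def
  proof (rule integral_le[OF gi has_integral_integrable[OF hi]])
    fix t assume "t \<in> {0..pi/2}"
    define w where "w = sqrt (1 - x\<^sup>2 * (sin t)\<^sup>2)"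
    note P = pt_setup[OF assms(1) w_def b_def]
    have "(1/2)^2 \<le> 1 - x\<^sup>2 * (sin t)\<^sup>2" using P(6) assms(2) by (simp add: power2_eq_square)
    then have "1/2 \<le> w" unfolding w_def by (rule real_le_rsqrt)
    then have "1/w \<le> 1/b - (w^2-b^2)/(2*b^3) + 24*(w^2-b^2)^2"
      by (intro upper_pt) (use P b in auto)
    moreover have "h t = 1/b - (w^2-b^2)/(2*b^3) + 24*(w^2-b^2)^2"
      unfolding h_def P(5) by (simp add: power2_eq_square field_simps eval_nat_numeral)
    ultimately show "1 / sqrt (1 - x\<^sup>2 * (sin t)\<^sup>2) \<le> h t" unfolding w_def by simp
  qed
  moreover have "integral {0..pi/2} h = pi / (2*b) + 3*x^4*pi/2"
    using integral_unique[OF hi] by simp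
  ultimately show ?thesis unfolding b_def by simp
qed



lemma suff:
  fixes u s x :: real
  assumes "0 \<le> u" "u \<le> 1" "1 \<le> s" "2 * s * u \<le> 1" "0 < x" "x < 1"
  shows "f_us u s x > 0"
proof -
  have ax: "\<bar>x\<bar> < 1" using assms by simp
  have x2: "x\<^sup>2 < 1" "0 < x\<^sup>2" using assms by (simp_all add: abs_square_less_1)
  define a where "a = 1 - x\<^sup>2/2"
  have a: "a > 0" "a \<le> 1" using x2 unfolding a_def by auto
  define b where "b = sqrt a"
  have b: "b > 0" using a unfolding b_def by simp
  have Kl: "ellK x \<ge> pi/(2*b) + x^4*pi/128" using K_lower[OF ax] unfolding b_def a_def .
  have x4: "x^4 > 0" using assms by simp
  have "2*(pi/(2*b) + x^4*pi/128) \<le> 2*ellK x" using Kl by (rule mult_left_mono) simp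
  then have "2*ellK x/pi \<ge> 2*(pi/(2*b) + x^4*pi/128)/pi" by (intro divide_right_mono) auto
  also have "2*(pi/(2*b) + x^4*pi/128)/pi = 1/b + x^4/64" by (simp add: field_simps)
  finally have F: "1/b + x^4/64 \<le> 2*ellK x/pi" .
  have "x^4/64 > 0" using x4 by simp
  then have "2*ellK x/pi > 1/b" using F by linarith
  then have G: "2*ellK x/pi > 1/b" .
  have "1/b > 0" using b by simp
  then have "2*ellK x/pi > 0" using G by linarith
  then have K1: "ellK x > 0" by (simp add: zero_less_divide_iff)
  have K: "ellK x > 0" "ln (2*ellK x/pi) > ln (1/b)" using K1 apply simp
    using G \<open>1/b > 0\<close> \<open>2*ellK x/pi > 0\<close> ln_less_cancel_iff by blast
  have lb: "ln (1/b) = -(1/2)*ln a" unfolding b_def using a by (simp add: ln_div ln_sqrt)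
  have eq: "ln (pi/(2*ellK x)) = - ln (2*ellK x/pi)" using K by (simp add: ln_div)
  have ux: "u*x\<^sup>2 \<le> x\<^sup>2" using assms x2 by (simp add: mult_le_cancel_right1)
  have sux: "s * u*x\<^sup>2 \<le> x\<^sup>2/2" using assms x2 by (simp add: mult_right_mono)
  have "ln (1 - s * u*x\<^sup>2) \<le> s * ln (1 - s * u*x\<^sup>2/s)"
  proof (rule ln_bern)
    show "s * u * x\<^sup>2 < 1" using sux x2 by linarith
    show "0 \<le> s * u * x\<^sup>2" using assms by simp
    show "1 \<le> s" using assms by simp
  qed
  also have "s * u*x\<^sup>2/s = u*x\<^sup>2" using assms by simp
  finally have l1: "ln (1 - s * u*x\<^sup>2) \<le> s * ln (1 - u*x\<^sup>2)" .
  have l2: "ln a \<le> ln (1 - s * u*x\<^sup>2)" unfolding a_def using sux a unfolding a_def by simp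
  show ?thesis unfolding f_us_def eq using K(2) lb l1 l2 by simp
qed



lemma nec:
  fixes u s :: real
  assumes "0 \<le> u" "u \<le> 1" "1 \<le> s" "2 * s * u > 1"
  shows "\<exists>x. 0 < x \<and> x < 1 \<and> \<not> f_us u s x > 0"
proof -
  define d where "d = s * u / 2 - 1/4"
  have d: "d > 0" using assms unfolding d_def by simp
  define m where "m = min (1/2) (d/4)"
  have m: "0 < m" "m \<le> 1/2" "m \<le> d/4" using d unfolding m_def by auto
  define x where "x = sqrt m"
  have x: "0 < x" "x < 1" "x\<^sup>2 = m" "x^4 = m^2" using m unfolding x_def
    by (auto simp: power4_eq_xxxx power2_eq_square) 
  have ax: "\<bar>x\<bar> < 1" using x by simp
  define a where "a = 1 - m/2"
  have a: "3/4 \<le> a" "a < 1" using m unfolding a_def by auto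
  define b where "b = sqrt a"
  have b: "0 < b" "b \<le> 1" using a unfolding b_def by auto
  have Ku: "ellK x \<le> pi/(2*b) + 3*m^2*pi/2"
    using K_upper[OF ax] x m unfolding b_def a_def by simp
  have Kl: "ellK x \<ge> pi/(2*b)" using K_lower[OF ax] x unfolding b_def a_def
    by (smt (verit) pi_gt_zero zero_le_power mult_nonneg_nonneg divide_nonneg_pos)
  have Kpos: "ellK x > 0" using Kl b by (smt (verit) pi_gt_zero divide_pos_pos)
  define y where "y = 2 * ellK x * b / pi"
  have ypos: "y > 0" unfolding y_def using Kpos b by simp
  have "y \<le> 2 * (pi/(2*b) + 3*m^2*pi/2) * b / pi" unfolding y_def
  proof -
    have "2 * ellK x \<le> 2 * (pi/(2*b) + 3*m^2*pi/2)" using Ku by (rule mult_left_mono) simp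
    then show "2 * ellK x * b / pi \<le> 2 * (pi/(2*b) + 3*m^2*pi/2) * b / pi"
      using b by (intro divide_right_mono mult_right_mono) auto
  qed
  also have "\<dots> = 1 + 3*m^2*b" using b by (simp add: field_simps)
  also have "\<dots> \<le> 1 + 3*m^2" using b by (simp add: mult_left_le)
  finally have y1: "y \<le> 1 + 3*m^2" .
  have "ln (2*ellK x/pi) = ln y - ln b" unfolding y_def using Kpos b
    by (simp add: ln_div ln_mult)
  also have "\<dots> \<le> (y - 1) - ln b" using ln_le_minus_one[OF ypos] by simp
  finally have L1: "ln (2*ellK x/pi) \<le> 3*m^2 - ln b" using y1 by simp
  have lb: "ln b = (1/2) * ln a" unfolding b_def using a by (simp add: ln_sqrt)
  have "- ln a = ln (1/a)" using a by (simp add: ln_div)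
  also have "\<dots> \<le> 1/a - 1" using a by (intro ln_le_minus_one) simp
  also have "\<dots> \<le> m/2 + m^2/3"
  proof -
    have "m^2/12 \<ge> m^3/6" using m by (simp add: power2_eq_square power3_eq_cube)
    then have "m/2 \<le> a*(m/2 + m^2/3)" unfolding a_def
      by (simp add: algebra_simps power2_eq_square power3_eq_cube)
    moreover have "1/a - 1 = (m/2)/a" using a unfolding a_def by (simp add: field_simps)
    moreover have "(m/2)/a \<le> m/2 + m^2/3"
      using \<open>m/2 \<le> a*(m/2 + m^2/3)\<close> a by (subst pos_divide_le_eq) (auto simp: mult.commute)
    ultimately show ?thesis by simp
  qed
  finally have L2: "- ln a \<le> m/2 + m^2/3" .
  have "u * m \<le> 1 * (1/2)" using assms m by (intro mult_mono) auto
  then have um: "u * m < 1" by simp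
  have "ln (1 - u*m) \<le> - (u*m)" using ln_le_minus_one[of "1 - u*m"] um by simp
  then have L3: "s/2 * ln (1 - u*x\<^sup>2) \<le> s/2 * (-(u*m))" using x assms by (intro mult_left_mono) auto
  have eq: "ln (pi/(2*ellK x)) = - ln (2*ellK x/pi)" using Kpos by (simp add: ln_div)
  have "f_us u s x \<le> - (s*u*m/2) + 3*m^2 + m/4 + m^2/6"
    unfolding f_us_def eq using L1 L2 L3 lb by (simp add: algebra_simps)
  also have "\<dots> = - d*m + 19/6*m^2" unfolding d_def by (simp add: algebra_simps)
  also have "\<dots> < 0"
  proof -
    have "m^2 \<le> (d/4)*m" using m by (simp add: power2_eq_square mult_right_mono)
    then have "19/6*m^2 \<le> 19/24*(d*m)" by simp
    moreover have "d*m > 0" using d m by simp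
    ultimately show ?thesis by linarith
  qed
  finally show ?thesis using x by auto
qed


theorem lemma2p1:
  fixes u s :: real
  assumes "0 \<le> u" and "u \<le> 1" and "1 \<le> s"
  shows "(\<forall>x. 0 < x \<and> x < 1 \<longrightarrow> f_us u s x > 0) \<longleftrightarrow> 2 * s * u \<le> 1"
proof
  assume H: "\<forall>x. 0 < x \<and> x < 1 \<longrightarrow> f_us u s x > 0"
  show "2 * s * u \<le> 1"
  proof (rule ccontr)
    assume "\<not> 2 * s * u \<le> 1"
    then obtain x where "0 < x" "x < 1" "\<not> f_us u s x > 0" using nec assms by force
    then show False using H by blast
  qed
next
  assume "2 * s * u \<le> 1"
  then show "\<forall>x. 0 < x \<and> x < 1 \<longrightarrow> f_us u s x > 0" using suff assms by blast
qed

end
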